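(* Let $X,V$ be independent $\mathbb{R}^d$-valued random vectors, $Y=X+V$, where $P_V$ has a Lebesgue density $f_V\in C_0^k(\mathbb{R}^d;\mathbb{R})$ for some $k\ge0$ and $\varphi_V(\omega)\ne0$ for Lebesgue-a.e. $\omega$. Let $g:\mathbb{R}^d\to\mathbb{R}$ be measurable with $\int|g|\,dP_X<\infty$, and let $f_Y=f_V*P_X$. Then $\mathbb{E}[g(X)\mid Y]$ admits a version given by \[ \theta_V^g(y)=\frac{(\mathscr{T}_{g,V}[f_Y])(y)}{f_Y(y)}\qquad\text{for all }y\text{ with }f_Y(y)>0, \] and this version is $k$-times continuously differentiable on the open set $\{y\in\mathbb{R}^d:f_Y(y)>0\}$.
   Context: $\varphi_V(\omega)=\mathbb{E}[e^{i\omega^\top V}]$. $C_0^k$: $C^k$ functions whose derivatives of order $\le k$ vanish at infinity; $\Xi^k=C_0^k\cap L^1$. $(\tau_xf)(t)=f(t-x)$. For a finite signed Radon measure $\mu$ with $\int|g|\,d|\mu|<\infty$, the Tweedie operator is $\mathscr{T}_{g,V}[f_V*\mu]=\int g(x)\tau_xf_V\,d\mu(x)$ (Bochner integral in $\Xi^k$), which is well defined and satisfies $(\mathscr{T}_{g,V}[f_V*\mu])(y)=\int g(x)f_V(y-x)\,d\mu(x)$. *)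

theory Defs
  imports "HOL-Probability.Probability"
begin

fun pderivs :: "'a::euclidean_space list \<Rightarrow> ('a \<Rightarrow> real) \<Rightarrow> 'a \<Rightarrow> real" where
  "pderivs [] f = f"
| "pderivs (b # bs) f = (\<lambda>x. frechet_derivative (pderivs bs f) (at x) b)"

definition Ck_on :: "nat \<Rightarrow> 'a::euclidean_space set \<Rightarrow> ('a \<Rightarrow> real) \<Rightarrow> bool" where
  "Ck_on k U f \<longleftrightarrow>
     (\<forall>bs. set bs \<subseteq> Basis \<and> length bs \<le> k \<longrightarrow>
        continuous_on U (pderivs bs f) \<and>
        (length bs < k \<longrightarrow> (\<forall>x\<in>U. pderivs bs f differentiable (at x))))"

definition C0k :: "nat \<Rightarrow> ('a::euclidean_space \<Rightarrow> real) \<Rightarrow> bool" where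
  "C0k k f \<longleftrightarrow> Ck_on k UNIV f \<and>
     (\<forall>bs. set bs \<subseteq> Basis \<and> length bs \<le> k \<longrightarrow> (pderivs bs f \<longlongrightarrow> 0) at_infinity)"

definition char_fun :: "'s measure \<Rightarrow> ('s \<Rightarrow> 'a::euclidean_space) \<Rightarrow> 'a \<Rightarrow> complex" where
  "char_fun M V w = (LINT s|M. cis (w \<bullet> V s))"

definition conv_dens :: "('a::euclidean_space \<Rightarrow> real) \<Rightarrow> 'a measure \<Rightarrow> 'a \<Rightarrow> real" where
  "conv_dens fV \<mu> y = (LINT x|\<mu>. fV (y - x))"

text \<open>Tweedie operator T_{g,V}[f_V * mu], evaluated pointwise via its defining identity
  (T_{g,V}[f_V * mu])(y) = int g(x) f_V(y - x) dmu(x).\<close>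
definition tweedie :: "('a::euclidean_space \<Rightarrow> real) \<Rightarrow> ('a \<Rightarrow> real) \<Rightarrow> 'a measure \<Rightarrow> 'a \<Rightarrow> real" where
  "tweedie g fV \<mu> y = (LINT x|\<mu>. g x * fV (y - x))"

end

theory Submission
  imports Defs
begin

definition pd :: "('a::euclidean_space \<Rightarrow> real) \<Rightarrow> 'a \<Rightarrow> 'a \<Rightarrow> real" where
  "pd f b = (\<lambda>x. frechet_derivative f (at x) b)"

fun sm :: "nat \<Rightarrow> 'a::euclidean_space set \<Rightarrow> ('a \<Rightarrow> real) \<Rightarrow> bool" where
  "sm 0 U f = continuous_on U f"
| "sm (Suc k) U f = (continuous_on U f \<and> (\<forall>x\<in>U. f differentiable (at x)) \<and>
      (\<forall>b\<in>Basis. sm k U (pd f b)))"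

lemma sm_cont: "sm k U f \<Longrightarrow> continuous_on U f"
  by (cases k) auto

lemma sm_Suc_imp: "sm (Suc k) U f \<Longrightarrow> sm k U f"
proof (induction k arbitrary: f)
  case 0 then show ?case by simp
next
  case (Suc k) then show ?case by auto
qed

lemma pd_eq: "(f has_derivative f') (at x) \<Longrightarrow> pd f b x = f' b"
  unfolding pd_def using frechet_derivative_at by metis

lemma pd_cong:
  assumes "open U" "x \<in> U" "\<And>y. y \<in> U \<Longrightarrow> f y = g y" "f differentiable (at x)"
  shows "pd g b x = pd f b x" "g differentiable (at x)"
proof -
  have d: "(f has_derivative frechet_derivative f (at x)) (at x)"
    using assms(4) frechet_derivative_works by blast
  have "(g has_derivative frechet_derivative f (at x)) (at x)"
    by (rule has_derivative_transform_within_open[OF d assms(1,2)]) (use assms(3) in auto)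
  then show "pd g b x = pd f b x" "g differentiable (at x)"
    using pd_eq[of g] unfolding pd_def differentiable_def by auto
qed

lemma sm_cong:
  assumes "open U" "\<And>x. x \<in> U \<Longrightarrow> f x = g x" "sm k U f"
  shows "sm k U g"
  using assms(2,3)
proof (induction k arbitrary: f g)
  case 0 then show ?case using continuous_on_cong by (metis sm.simps(1))
next
  case (Suc k)
  have c: "continuous_on U g" using Suc.prems continuous_on_cong by (metis sm.simps(2))
  have d: "\<forall>x\<in>U. g differentiable (at x)"
  proof
    fix x assume "x \<in> U"
    then show "g differentiable (at x)" using Suc.prems pd_cong(2)[OF assms(1), of x f g] by auto
  qed
  have "sm k U (pd g b)" if "b \<in> Basis" for b
  proof (rule Suc.IH[of "pd f b"])
    show "sm k U (pd f b)" using Suc.prems that by auto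
    fix x assume "x \<in> U" then show "pd f b x = pd g b x"
      using Suc.prems pd_cong[OF assms(1)] by (metis sm.simps(2))
  qed
  then show ?case using c d by simp
qed

lemma sm_add:
  assumes "open U"
  shows "sm k U f \<Longrightarrow> sm k U g \<Longrightarrow> sm k U (\<lambda>x. f x + g x)"
proof (induction k arbitrary: f g)
  case 0 then show ?case by (auto intro: continuous_on_add)
next
  case (Suc k)
  have "sm k U (pd (\<lambda>x. f x + g x) b)" if b: "b \<in> Basis" for b
  proof (rule sm_cong[OF assms])
    show "sm k U (\<lambda>x. pd f b x + pd g b x)" using Suc b by auto
    fix x assume x: "x \<in> U"
    have "((\<lambda>x. f x + g x) has_derivative (\<lambda>h. frechet_derivative f (at x) h + frechet_derivative g (at x) h)) (at x)"
      using Suc.prems x by (intro has_derivative_add) (auto simp: frechet_derivative_works[symmetric])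
    then show "pd f b x + pd g b x = pd (\<lambda>x. f x + g x) b x"
      by (simp add: pd_eq) (simp add: pd_def)
  qed
  moreover have "\<forall>x\<in>U. (\<lambda>x. f x + g x) differentiable (at x)"
    using Suc.prems by auto
  ultimately show ?case using Suc.prems by (auto intro: continuous_on_add)
qed

lemma sm_minus:
  assumes "open U"
  shows "sm k U f \<Longrightarrow> sm k U (\<lambda>x. - f x)"
proof (induction k arbitrary: f)
  case 0 then show ?case by (auto intro: continuous_on_minus)
next
  case (Suc k)
  have "sm k U (pd (\<lambda>x. - f x) b)" if b: "b \<in> Basis" for b
  proof (rule sm_cong[OF assms])
    show "sm k U (\<lambda>x. - pd f b x)" using Suc b by auto
    fix x assume x: "x \<in> U"
    have "((\<lambda>x. - f x) has_derivative (\<lambda>h. - frechet_derivative f (at x) h)) (at x)"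
      using Suc.prems x by (intro has_derivative_minus) (auto simp: frechet_derivative_works[symmetric])
    then show "- pd f b x = pd (\<lambda>x. - f x) b x"
      by (simp add: pd_eq) (simp add: pd_def)
  qed
  moreover have "\<forall>x\<in>U. (\<lambda>x. - f x) differentiable (at x)"
    using Suc.prems by auto
  ultimately show ?case using Suc.prems by (auto intro: continuous_on_minus)
qed

lemma sm_mult:
  assumes "open U"
  shows "sm k U f \<Longrightarrow> sm k U g \<Longrightarrow> sm k U (\<lambda>x. f x * g x)"
proof (induction k arbitrary: f g)
  case 0 then show ?case by (auto intro: continuous_on_mult)
next
  case (Suc k)
  have "sm k U (pd (\<lambda>x. f x * g x) b)" if b: "b \<in> Basis" for b
  proof (rule sm_cong[OF assms])
    have "sm k U f" "sm k U g" using Suc.prems sm_Suc_imp by blast+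
    then show "sm k U (\<lambda>x. f x * pd g b x + pd f b x * g x)" using Suc b
      by (intro sm_add[OF assms]) auto
    fix x assume x: "x \<in> U"
    have "((\<lambda>x. f x * g x) has_derivative (\<lambda>h. f x * frechet_derivative g (at x) h + frechet_derivative f (at x) h * g x)) (at x)"
      using Suc.prems x by (intro has_derivative_mult) (auto simp: frechet_derivative_works[symmetric])
    then show "f x * pd g b x + pd f b x * g x = pd (\<lambda>x. f x * g x) b x"
      by (simp add: pd_eq) (simp add: pd_def)
  qed
  moreover have "\<forall>x\<in>U. (\<lambda>x. f x * g x) differentiable (at x)"
    using Suc.prems by auto
  ultimately show ?case using Suc.prems by (auto intro: continuous_on_mult)
qed

lemma sm_divide:
  assumes "open U"
  shows "sm k U f \<Longrightarrow> sm k U g \<Longrightarrow> (\<forall>x\<in>U. g x \<noteq> 0) \<Longrightarrow> sm k U (\<lambda>x. f x / g x)"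
proof (induction k arbitrary: f g)
  case 0 then show ?case by (auto intro: continuous_on_divide)
next
  case (Suc k)
  have "sm k U (pd (\<lambda>x. f x / g x) b)" if b: "b \<in> Basis" for b
  proof (rule sm_cong[OF assms])
    have fg: "sm k U f" "sm k U g" using Suc.prems sm_Suc_imp by blast+
    have "sm k U (\<lambda>x. pd f b x * g x + - (f x * pd g b x))"
      using Suc b fg by (intro sm_add[OF assms] sm_minus[OF assms] sm_mult[OF assms]) auto
    moreover have "sm k U (\<lambda>x. g x * g x)" using fg by (intro sm_mult[OF assms]) auto
    ultimately show "sm k U (\<lambda>x. (pd f b x * g x + - (f x * pd g b x)) / (g x * g x))"
      using Suc.prems by (intro Suc.IH) auto
    fix x assume x: "x \<in> U"
    have "((\<lambda>x. f x / g x) has_derivative (\<lambda>h. - f x * (inverse (g x) * frechet_derivative g (at x) h * inverse (g x)) +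
           frechet_derivative f (at x) h / g x)) (at x)"
      using Suc.prems x by (intro has_derivative_divide) (auto simp: frechet_derivative_works[symmetric])
    then show "(pd f b x * g x + - (f x * pd g b x)) / (g x * g x) = pd (\<lambda>x. f x / g x) b x"
      using Suc.prems x by (simp add: pd_eq) (simp add: pd_def field_simps)
  qed
  moreover have "\<forall>x\<in>U. (\<lambda>x. f x / g x) differentiable (at x)"
    using Suc.prems by (auto intro!: differentiable_divide)
  ultimately show ?case using Suc.prems by (auto intro: continuous_on_divide)
qed

lemma pderivs_snoc: "pderivs (bs @ [b]) f = pderivs bs (pd f b)"
  by (induction bs) (auto simp: pd_def)

lemma sm_Ck: "sm k U f \<Longrightarrow> Ck_on k U f"
proof (induction k arbitrary: f)
  case 0 then show ?case by (auto simp: Ck_on_def)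
next
  case (Suc k)
  show ?case unfolding Ck_on_def
  proof (intro allI impI)
    fix bs :: "'a list" assume bs: "set bs \<subseteq> Basis \<and> length bs \<le> Suc k"
    show "continuous_on U (pderivs bs f) \<and> (length bs < Suc k \<longrightarrow> (\<forall>x\<in>U. pderivs bs f differentiable at x))"
    proof (cases bs rule: rev_exhaust)
      case Nil then show ?thesis using Suc.prems by simp
    next
      case (snoc bs' b)
      have "Ck_on k U (pd f b)" using Suc snoc bs by auto
      then show ?thesis using bs snoc unfolding Ck_on_def by (auto simp: pderivs_snoc)
    qed
  qed
qed


lemma meas_shift:
  fixes h :: "'a::euclidean_space \<Rightarrow> real"
  assumes "sets N = sets borel" "continuous_on UNIV h"
  shows "(\<lambda>x. h (y - x)) \<in> borel_measurable N"
proof -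
  have "(\<lambda>x. y - x) \<in> borel_measurable N"
    using measurable_ident_sets[OF assms(1)] by measurable
  then show ?thesis by (rule borel_measurable_continuous_on[OF assms(2)])
qed

lemma integrable_wh:
  fixes h :: "'a::euclidean_space \<Rightarrow> real"
  assumes "sets N = sets borel" "integrable N w" "continuous_on UNIV h" "\<And>z. \<bar>h z\<bar> \<le> B"
  shows "integrable N (\<lambda>x. w x * h (y - x))"
proof (rule Bochner_Integration.integrable_bound[where f="\<lambda>x. B * w x"])
  show "integrable N (\<lambda>x. B * w x)" using assms by auto
  show "(\<lambda>x. w x * h (y - x)) \<in> borel_measurable N"
    using meas_shift[OF assms(1,3)] assms(2) by measurable
  show "AE x in N. norm (w x * h (y - x)) \<le> norm (B * w x)"
  proof (rule AE_I2)
    fix x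
    have "\<bar>w x\<bar> * \<bar>h (y - x)\<bar> \<le> \<bar>w x\<bar> * B" using assms(4) by (intro mult_left_mono) auto
    moreover have "B \<ge> 0" using assms(4)[of 0] by linarith
    ultimately show "norm (w x * h (y - x)) \<le> norm (B * w x)" by (simp add: abs_mult mult.commute)
  qed
qed

definition cv :: "'a measure \<Rightarrow> ('a \<Rightarrow> real) \<Rightarrow> ('a::euclidean_space \<Rightarrow> real) \<Rightarrow> 'a \<Rightarrow> real" where
  "cv N w h y = (\<integral>x. w x * h (y - x) \<partial>N)"

lemma cv_cont:
  fixes h :: "'a::euclidean_space \<Rightarrow> real"
  assumes "sets N = sets borel" "integrable N w" "continuous_on UNIV h" "bounded (range h)"
  shows "continuous_on UNIV (cv N w h)"
proof -
  obtain B where B: "\<And>z. \<bar>h z\<bar> \<le> B" using assms(4) unfolding bounded_pos by auto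
  have "isCont (cv N w h) y" for y
    unfolding continuous_at_sequentially
  proof (intro allI impI)
    fix Y assume Y: "Y \<longlonglongrightarrow> y"
    have "(\<lambda>i. \<integral>x. w x * h (Y i - x) \<partial>N) \<longlonglongrightarrow> (\<integral>x. w x * h (y - x) \<partial>N)"
    proof (rule integral_dominated_convergence[where w="\<lambda>x. \<bar>w x\<bar> * B"])
      show "(\<lambda>x. w x * h (y - x)) \<in> borel_measurable N"
        using meas_shift[OF assms(1,3)] assms(2) by measurable
      show "(\<lambda>x. w x * h (Y i - x)) \<in> borel_measurable N" for i
        using meas_shift[OF assms(1,3)] assms(2) by measurable
      show "integrable N (\<lambda>x. \<bar>w x\<bar> * B)" using assms by auto
      show "AE x in N. (\<lambda>i. w x * h (Y i - x)) \<longlonglongrightarrow> w x * h (y - x)"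
      proof (rule AE_I2, rule tendsto_mult_left)
        fix x
        have "(\<lambda>i. Y i - x) \<longlonglongrightarrow> y - x" using Y by (intro tendsto_intros)
        moreover have "isCont h (y - x)" using assms(3) continuous_on_eq_continuous_at by blast
        ultimately show "(\<lambda>i. h (Y i - x)) \<longlonglongrightarrow> h (y - x)"
          using isCont_tendsto_compose by blast
      qed
      show "AE x in N. norm (w x * h (Y i - x)) \<le> \<bar>w x\<bar> * B" for i
        using B by (auto simp: abs_mult intro!: mult_left_mono)
    qed
    then show "(cv N w h \<circ> Y) \<longlonglongrightarrow> cv N w h y" by (simp add: cv_def comp_def)
  qed
  then show ?thesis using continuous_on_eq_continuous_at by blast
qed

lemma fd_expand:
  fixes f :: "'a::euclidean_space \<Rightarrow> real"
  assumes "f differentiable (at z)"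
  shows "frechet_derivative f (at z) u = (\<Sum>b\<in>Basis. (u \<bullet> b) * pd f b z)"
proof -
  have bl: "bounded_linear (frechet_derivative f (at z))"
    using assms frechet_derivative_works has_derivative_bounded_linear by blast
  then have lin: "linear (frechet_derivative f (at z))" using bounded_linear.linear by blast
  have "frechet_derivative f (at z) u = frechet_derivative f (at z) (\<Sum>b\<in>Basis. (u \<bullet> b) *\<^sub>R b)"
    by (simp add: euclidean_representation)
  also have "\<dots> = (\<Sum>b\<in>Basis. (u \<bullet> b) * pd f b z)"
    using lin by (simp add: linear_sum linear_cmul pd_def)
  finally show ?thesis .
qed

lemma sum_inner_Basis_delta:
  "b \<in> (Basis::'a::euclidean_space set) \<Longrightarrow> (\<Sum>b'\<in>Basis. (b \<bullet> b') * F b') = (F b::real)"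
  by (simp add: inner_Basis if_distrib[of "\<lambda>t. t * _"] sum.If_cases)


lemma cv_deriv:
  fixes h :: "'a::euclidean_space \<Rightarrow> real"
  assumes N: "sets N = sets borel" and w: "integrable N w"
    and hc: "continuous_on UNIV h" and hd: "\<And>z. h differentiable (at z)"
    and pc: "\<And>b. b\<in>Basis \<Longrightarrow> continuous_on UNIV (pd h b)"
    and pb: "\<And>b. b\<in>Basis \<Longrightarrow> bounded (range (pd h b))"
    and hb: "bounded (range h)"
  shows "(cv N w h has_derivative (\<lambda>u. \<Sum>b\<in>Basis. (u \<bullet> b) * cv N w (pd h b) y)) (at y)"
proof -
  have "\<forall>b\<in>Basis. \<exists>B. \<forall>z. \<bar>pd h b z\<bar> \<le> B"
    using pb unfolding bounded_pos by fastforce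
  then obtain Bb where Bb: "\<And>b z. b \<in> Basis \<Longrightarrow> \<bar>pd h b z\<bar> \<le> Bb b" by metis
  have Bb0: "b \<in> Basis \<Longrightarrow> 0 \<le> Bb b" for b using Bb[of b 0] by linarith
  define C where "C = (\<Sum>b\<in>Basis. Bb b)"
  have C0: "0 \<le> C" unfolding C_def using Bb0 by (simp add: sum_nonneg)
  have Dbound: "\<bar>frechet_derivative h (at z) u\<bar> \<le> C * norm u" for z u
  proof -
    have "\<bar>frechet_derivative h (at z) u\<bar> = \<bar>\<Sum>b\<in>Basis. (u \<bullet> b) * pd h b z\<bar>"
      using fd_expand[OF hd] by simp
    also have "\<dots> \<le> (\<Sum>b\<in>Basis. \<bar>(u \<bullet> b) * pd h b z\<bar>)" by (rule sum_abs)
    also have "\<dots> \<le> (\<Sum>b\<in>Basis. norm u * Bb b)"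
      by (intro sum_mono) (auto simp: abs_mult intro!: mult_mono Basis_le_norm Bb)
    also have "\<dots> = C * norm u" by (simp add: C_def sum_distrib_left mult.commute)
    finally show ?thesis .
  qed
  have hB: "\<bar>h a - h c\<bar> \<le> C * norm (a - c)" for a c
  proof -
    have "norm (h a - h c) \<le> C * norm (a - c)"
    proof (rule differentiable_bound[of UNIV h "\<lambda>z. frechet_derivative h (at z)" C])
      show "(h has_derivative frechet_derivative h (at x)) (at x within UNIV)" for x
        using hd frechet_derivative_works by auto
      show "onorm (frechet_derivative h (at x)) \<le> C" for x
        by (rule onorm_le) (use Dbound in auto)
    qed auto
    then show ?thesis by simp
  qed
  define R where "R x u = h (y + u - x) - h (y - x) - (\<Sum>b\<in>Basis. (u \<bullet> b) * pd h b (y - x))" for x u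
  have R_alt: "R x u = h ((y - x) + u) - h (y - x) - frechet_derivative h (at (y - x)) u" for x u
    unfolding R_def fd_expand[OF hd] by (simp add: algebra_simps)
  have Rb: "\<bar>R x u\<bar> \<le> 2 * C * norm u" for x u
  proof -
    have "\<bar>R x u\<bar> \<le> \<bar>h ((y - x) + u) - h (y - x)\<bar> + \<bar>frechet_derivative h (at (y - x)) u\<bar>"
      unfolding R_alt by linarith
    also have "\<dots> \<le> C * norm u + C * norm u"
      using hB[of "(y - x) + u" "y - x"] Dbound[of "y - x" u] by simp
    finally show ?thesis by simp
  qed
  have bdd: "\<bar>h z\<bar> \<le> \<bar>h 0\<bar> + C * norm z" for z using hB[of z 0] by simp
  have mh: "(\<lambda>x. h (v - x)) \<in> borel_measurable N" for v by (rule meas_shift[OF N hc])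
  have mp: "b \<in> Basis \<Longrightarrow> (\<lambda>x. pd h b (v - x)) \<in> borel_measurable N" for v b by (rule meas_shift[OF N pc])
  have mw: "w \<in> borel_measurable N" using w by auto
  have mR: "(\<lambda>x. R x u) \<in> borel_measurable N" for u
    unfolding R_def using mh mp by (intro borel_measurable_diff borel_measurable_sum borel_measurable_times) auto
  have ip: "b \<in> Basis \<Longrightarrow> integrable N (\<lambda>x. w x * pd h b (v - x))" for v b
    by (rule integrable_wh[OF N w pc Bb]) auto
  obtain Bh where Bh: "\<And>z. \<bar>h z\<bar> \<le> Bh" using hb unfolding bounded_pos by auto
  have ih: "integrable N (\<lambda>x. w x * h (v - x))" for v
    by (rule integrable_wh[OF N w hc Bh])
  define L where "L u = (\<Sum>b\<in>Basis. (u \<bullet> b) * cv N w (pd h b) y)" for u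
  have bl: "bounded_linear L" unfolding L_def
    by (intro bounded_linear_sum bounded_linear_compose[OF bounded_linear_mult_left bounded_linear_inner_left])
  have eq: "cv N w h (y + u) - cv N w h y - L u = (\<integral>x. w x * R x u \<partial>N)" for u
  proof -
    have "(\<lambda>x. w x * R x u) = (\<lambda>x. w x * h (y + u - x) - w x * h (y - x) - (\<Sum>b\<in>Basis. (u \<bullet> b) * (w x * pd h b (y - x))))"
      by (auto simp: R_def algebra_simps sum_distrib_left)
    then have "(\<integral>x. w x * R x u \<partial>N) = (\<integral>x. w x * h (y + u - x) \<partial>N) - (\<integral>x. w x * h (y - x) \<partial>N) - (\<Sum>b\<in>Basis. (u \<bullet> b) * (\<integral>x. w x * pd h b (y - x) \<partial>N))"
      using ih ip by (simp add: integral_diff integrable_sum integral_sum)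
    then show ?thesis by (simp add: cv_def L_def)
  qed
  define g where "g u = (\<integral>x. \<bar>w x\<bar> * (\<bar>R x u\<bar> / norm u) \<partial>N)" for u
  have le: "norm (norm (cv N w h (y + u) - cv N w h y - L u) / norm u) \<le> g u" for u
  proof -
    have "norm (cv N w h (y + u) - cv N w h y - L u) \<le> (\<integral>x. norm (w x * R x u) \<partial>N)"
      unfolding eq by (rule integral_norm_bound)
    then have "norm (cv N w h (y + u) - cv N w h y - L u) / norm u \<le> (\<integral>x. norm (w x * R x u) \<partial>N) / norm u"
      by (simp add: divide_right_mono)
    also have "\<dots> = g u" unfolding g_def integral_divide_zero[symmetric]
      by (simp add: abs_mult)
    finally show ?thesis by simp
  qed
  have "(g \<longlongrightarrow> 0) (at 0)"
    unfolding tendsto_at_iff_sequentially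
  proof (intro allI impI)
    fix U :: "nat \<Rightarrow> 'a" assume U0: "\<forall>i. U i \<in> UNIV - {0}" and U: "U \<longlonglongrightarrow> 0"
    have "(\<lambda>i. \<integral>x. \<bar>w x\<bar> * (\<bar>R x (U i)\<bar> / norm (U i)) \<partial>N) \<longlonglongrightarrow> (\<integral>x. 0 \<partial>N)"
    proof (rule integral_dominated_convergence[where w="\<lambda>x. \<bar>w x\<bar> * (2 * C)"])
      show "(\<lambda>x. 0::real) \<in> borel_measurable N" by simp
      show "(\<lambda>x. \<bar>w x\<bar> * (\<bar>R x (U i)\<bar> / norm (U i))) \<in> borel_measurable N" for i
        using mw mR by measurable
      show "integrable N (\<lambda>x. \<bar>w x\<bar> * (2 * C))" using w by auto
      show "AE x in N. norm (\<bar>w x\<bar> * (\<bar>R x (U i)\<bar> / norm (U i))) \<le> \<bar>w x\<bar> * (2 * C)" for i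
      proof (rule AE_I2)
        fix x
        have "U i \<noteq> 0" using U0 by auto
        then have "\<bar>R x (U i)\<bar> / norm (U i) \<le> 2 * C" using Rb[of x "U i"] by (simp add: divide_le_eq)
        then show "norm (\<bar>w x\<bar> * (\<bar>R x (U i)\<bar> / norm (U i))) \<le> \<bar>w x\<bar> * (2 * C)"
          by (simp add: abs_mult) (metis abs_ge_zero mult_left_mono times_divide_eq_right)
      qed
      show "AE x in N. (\<lambda>i. \<bar>w x\<bar> * (\<bar>R x (U i)\<bar> / norm (U i))) \<longlonglongrightarrow> 0"
      proof (rule AE_I2, rule tendsto_mult_right_zero)
        fix x
        have "(h has_derivative frechet_derivative h (at (y - x))) (at (y - x))"
          using hd frechet_derivative_works by blast
        then have "((\<lambda>v. norm (h ((y - x) + v) - h (y - x) - frechet_derivative h (at (y - x)) v) / norm v) \<longlongrightarrow> 0) (at 0)"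
          unfolding has_derivative_at by blast
        then have "((\<lambda>v. \<bar>R x v\<bar> / norm v) \<longlongrightarrow> 0) (at 0)"
          by (simp add: R_alt)
        then show "(\<lambda>i. \<bar>R x (U i)\<bar> / norm (U i)) \<longlonglongrightarrow> 0"
          using U U0 unfolding tendsto_at_iff_sequentially comp_def by blast
      qed
    qed
    then show "(g \<circ> U) \<longlonglongrightarrow> 0" by (simp add: g_def comp_def)
  qed
  then have "((\<lambda>u. norm (cv N w h (y + u) - cv N w h y - L u) / norm u) \<longlongrightarrow> 0) (at 0)"
    by (rule Lim_null_comparison[rotated]) (use le in auto)
  then have "(cv N w h has_derivative L) (at y)"
    unfolding has_derivative_at using bl by blast
  then show ?thesis unfolding L_def .
qed


fun bsm :: "nat \<Rightarrow> ('a::euclidean_space \<Rightarrow> real) \<Rightarrow> bool" where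
  "bsm 0 h = (continuous_on UNIV h \<and> bounded (range h))"
| "bsm (Suc k) h = (continuous_on UNIV h \<and> bounded (range h) \<and> (\<forall>x. h differentiable (at x)) \<and>
      (\<forall>b\<in>Basis. bsm k (pd h b)))"

lemma bsm_cb: "bsm k h \<Longrightarrow> continuous_on UNIV h \<and> bounded (range h)"
  by (cases k) auto

lemma bsm_cv:
  assumes N: "sets N = sets borel" and w: "integrable N w"
  shows "bsm k h \<Longrightarrow> sm k UNIV (cv N w h)"
proof (induction k arbitrary: h)
  case 0 then show ?case using cv_cont[OF N w] by simp
next
  case (Suc k)
  have hc: "continuous_on UNIV h" "bounded (range h)" "\<And>z. h differentiable (at z)"
    and pb: "\<And>b. b \<in> Basis \<Longrightarrow> bsm k (pd h b)" using Suc.prems by auto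
  have d: "(cv N w h has_derivative (\<lambda>u. \<Sum>b\<in>Basis. (u \<bullet> b) * cv N w (pd h b) y)) (at y)" for y
    using cv_deriv[OF N w hc(1) hc(3) _ _ hc(2)] bsm_cb[OF pb] by blast
  have "pd (cv N w h) b = cv N w (pd h b)" if "b \<in> Basis" for b
  proof
    fix y show "pd (cv N w h) b y = cv N w (pd h b) y"
      using pd_eq[OF d[of y], of b] sum_inner_Basis_delta[OF that] by simp
  qed
  then show ?case using Suc.IH[OF pb] cv_cont[OF N w hc(1,2)] d
    by (auto simp: differentiable_def)
qed

lemma bounded_vanish:
  fixes f :: "'a::euclidean_space \<Rightarrow> real"
  assumes "continuous_on UNIV f" "(f \<longlongrightarrow> 0) at_infinity"
  shows "bounded (range f)"
proof -
  have "eventually (\<lambda>x. dist (f x) 0 < 1) at_infinity"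
    using assms(2) unfolding tendsto_iff by (meson zero_less_one)
  then obtain r where r: "\<And>x. r \<le> norm x \<Longrightarrow> \<bar>f x\<bar> < 1"
    unfolding eventually_at_infinity by auto
  have "compact (f ` cball 0 r)"
    by (rule compact_continuous_image) (use assms(1) continuous_on_subset in auto)
  then obtain B where B: "\<And>x. x \<in> cball 0 r \<Longrightarrow> \<bar>f x\<bar> \<le> B"
  proof -
    have "bounded (f ` cball 0 r)" using \<open>compact (f ` cball 0 r)\<close> compact_imp_bounded by blast
    then obtain B where "\<forall>y\<in>f ` cball 0 r. norm y \<le> B" unfolding bounded_iff by blast
    then show ?thesis by (intro that[of B]) auto
  qed
  have "\<bar>f x\<bar> \<le> max B 1" for x
  proof (cases "norm x \<le> r")
    case True then show ?thesis using B[of x] by auto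
  next
    case False then show ?thesis using r[of x] by auto
  qed
  then show ?thesis unfolding bounded_iff by auto
qed

lemma pderivs_bsm:
  "(\<forall>bs. set bs \<subseteq> Basis \<and> length bs \<le> k \<longrightarrow> continuous_on UNIV (pderivs bs h) \<and>
      bounded (range (pderivs bs h)) \<and> (length bs < k \<longrightarrow> (\<forall>x. pderivs bs h differentiable (at x))))
   \<Longrightarrow> bsm k h"
proof (induction k arbitrary: h)
  case 0 then show ?case by (auto dest: spec[of _ "[]"])
next
  case (Suc k)
  have "bsm k (pd h b)" if b: "b \<in> Basis" for b
  proof (rule Suc.IH, intro allI impI)
    fix bs :: "'a list" assume bs: "set bs \<subseteq> Basis \<and> length bs \<le> k"
    then have "set (bs @ [b]) \<subseteq> Basis \<and> length (bs @ [b]) \<le> Suc k" using b by auto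
    then show "continuous_on UNIV (pderivs bs (pd h b)) \<and> bounded (range (pderivs bs (pd h b))) \<and>
       (length bs < k \<longrightarrow> (\<forall>x. pderivs bs (pd h b) differentiable at x))"
      using Suc.prems by (auto simp: pderivs_snoc dest!: spec[of _ "bs @ [b]"])
  qed
  then show ?case using Suc.prems by (auto dest: spec[of _ "[]"])
qed

lemma C0k_bsm: "C0k k f \<Longrightarrow> bsm k f"
  unfolding C0k_def Ck_on_def
  by (rule pderivs_bsm) (auto intro: bounded_vanish)


lemma joint_law:
  fixes X V :: "'s \<Rightarrow> 'd::euclidean_space" and fV :: "'d \<Rightarrow> real"
  assumes P: "prob_space M" and X[measurable]: "X \<in> borel_measurable M" and V[measurable]: "V \<in> borel_measurable M"
    and ind: "prob_space.indep_var M borel X borel V"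
    and dist: "distributed M lborel V (\<lambda>x. ennreal (fV x))"
    and fm[measurable]: "fV \<in> borel_measurable borel"
  shows "distr M (borel \<Otimes>\<^sub>M borel) (\<lambda>s. (X s, X s + V s)) =
         density (distr M borel X \<Otimes>\<^sub>M lborel) (\<lambda>z. ennreal (fV (snd z - fst z)))"
proof -
  interpret prob_space M by (rule P)
  define PX where "PX = distr M borel X"
  define PV where "PV = distr M borel V"
  have sPX[measurable_cong]: "sets PX = sets borel" unfolding PX_def by simp
  have sPV[measurable_cong]: "sets PV = sets borel" unfolding PV_def by simp
  have PV: "PV = density lborel (\<lambda>x. ennreal (fV x))"
  proof -
    have "PV = distr M lborel V" unfolding PV_def by (rule distr_cong) auto
    then show ?thesis using distributed_distr_eq_density[OF dist] by simp
  qed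
  have J: "distr M (borel \<Otimes>\<^sub>M borel) (\<lambda>s. (X s, V s)) = PX \<Otimes>\<^sub>M PV"
    using ind unfolding indep_var_distribution_eq PX_def PV_def by simp
  interpret PXs: prob_space PX unfolding PX_def by (rule prob_space_distr) simp
  interpret PVs: prob_space PV unfolding PV_def by (rule prob_space_distr) simp
  interpret PXL: pair_sigma_finite PX lborel ..
  have "distr M (borel \<Otimes>\<^sub>M borel) (\<lambda>s. (X s, X s + V s)) =
        distr (distr M (borel \<Otimes>\<^sub>M borel) (\<lambda>s. (X s, V s))) (borel \<Otimes>\<^sub>M borel) (\<lambda>(x,v). (x, x + v))"
    by (subst distr_distr) (auto simp: comp_def)
  also have "\<dots> = distr (PX \<Otimes>\<^sub>M PV) (borel \<Otimes>\<^sub>M borel) (\<lambda>(x,v). (x, x + v))" using J by simp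
  also have "\<dots> = density (PX \<Otimes>\<^sub>M lborel) (\<lambda>z. ennreal (fV (snd z - fst z)))"
  proof (rule measure_eqI)
    have "sets (PX \<Otimes>\<^sub>M lborel) = sets (borel \<Otimes>\<^sub>M borel)"
      by (rule sets_pair_measure_cong) (auto simp: sPX)
    then show "sets (distr (PX \<Otimes>\<^sub>M PV) (borel \<Otimes>\<^sub>M borel) (\<lambda>(x,v). (x, x + v))) =
      sets (density (PX \<Otimes>\<^sub>M lborel) (\<lambda>z. ennreal (fV (snd z - fst z))))" by (metis sets_distr sets_density)
    fix A assume "A \<in> sets (distr (PX \<Otimes>\<^sub>M PV) (borel \<Otimes>\<^sub>M borel) (\<lambda>(x,v). (x, x + v)))"
    then have A[measurable]: "A \<in> sets (borel \<Otimes>\<^sub>M borel)" by simp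
    have shift: "(\<integral>\<^sup>+v. ennreal (fV v) * indicator A (x, x + v) \<partial>lborel) =
                 (\<integral>\<^sup>+y. ennreal (fV (y - x)) * indicator A (x, y) \<partial>lborel)" for x
    proof -
      have "(\<integral>\<^sup>+y. ennreal (fV (y - x)) * indicator A (x, y) \<partial>lborel) =
            (\<integral>\<^sup>+y. ennreal (fV (y - x)) * indicator A (x, y) \<partial>(distr lborel borel ((+) x)))"
        by (simp add: lborel_distr_plus)
      also have "\<dots> = (\<integral>\<^sup>+v. ennreal (fV (x + v - x)) * indicator A (x, x + v) \<partial>lborel)"
        by (subst nn_integral_distr) auto
      finally show ?thesis by simp
    qed
    have "emeasure (distr (PX \<Otimes>\<^sub>M PV) (borel \<Otimes>\<^sub>M borel) (\<lambda>(x,v). (x, x + v))) A =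
          (\<integral>\<^sup>+z. indicator A z \<partial>distr (PX \<Otimes>\<^sub>M PV) (borel \<Otimes>\<^sub>M borel) (\<lambda>(x,v). (x, x + v)))"
      by (simp add: nn_integral_indicator)
    also have "\<dots> = (\<integral>\<^sup>+z. indicator A ((\<lambda>(x,v). (x, x + v)) z) \<partial>(PX \<Otimes>\<^sub>M PV))"
      by (subst nn_integral_distr) auto
    also have "\<dots> = (\<integral>\<^sup>+x. \<integral>\<^sup>+v. indicator A (x, x + v) \<partial>PV \<partial>PX)"
      by (subst PVs.nn_integral_fst[symmetric]) auto
    also have "\<dots> = (\<integral>\<^sup>+x. \<integral>\<^sup>+v. ennreal (fV v) * indicator A (x, x + v) \<partial>lborel \<partial>PX)"
      unfolding PV by (subst nn_integral_density) auto
    also have "\<dots> = (\<integral>\<^sup>+x. \<integral>\<^sup>+y. ennreal (fV (y - x)) * indicator A (x, y) \<partial>lborel \<partial>PX)"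
      by (simp add: shift)
    also have "\<dots> = (\<integral>\<^sup>+z. ennreal (fV (snd z - fst z)) * indicator A z \<partial>(PX \<Otimes>\<^sub>M lborel))"
      by (subst lborel.nn_integral_fst[symmetric]) auto
    also have "\<dots> = emeasure (density (PX \<Otimes>\<^sub>M lborel) (\<lambda>z. ennreal (fV (snd z - fst z)))) A"
      by (subst emeasure_density) (auto simp: mult.commute)
    finally show "emeasure (distr (PX \<Otimes>\<^sub>M PV) (borel \<Otimes>\<^sub>M borel) (\<lambda>(x,v). (x, x + v))) A =
      emeasure (density (PX \<Otimes>\<^sub>M lborel) (\<lambda>z. ennreal (fV (snd z - fst z)))) A" .
  qed
  finally show ?thesis unfolding PX_def .
qed


lemma sm_subset: "sm k V f \<Longrightarrow> U \<subseteq> V \<Longrightarrow> sm k U f"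
proof (induction k arbitrary: f)
  case 0 then show ?case using continuous_on_subset by auto
next
  case (Suc k) then show ?case using continuous_on_subset by auto
qed

theorem mainTheorem11:
  fixes M :: "'s measure" and X V :: "'s \<Rightarrow> 'd::euclidean_space"
    and fV g :: "'d \<Rightarrow> real" and k :: nat
  assumes "prob_space M"
    and "X \<in> borel_measurable M" and "V \<in> borel_measurable M"
    and "prob_space.indep_var M borel X borel V"
    and "\<And>x. 0 \<le> fV x"
    and "distributed M lborel V (\<lambda>x. ennreal (fV x))"
    and "C0k k fV"
    and "AE w in lborel. char_fun M V w \<noteq> 0"
    and "g \<in> borel_measurable borel"
    and "integrable (distr M borel X) g"
  shows "\<exists>\<theta> :: 'd \<Rightarrow> real.
           \<theta> \<in> borel_measurable borel
         \<and> (AE s in M. real_cond_exp M (vimage_algebra (space M) (\<lambda>s. X s + V s) borel)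
                         (\<lambda>s. g (X s)) s = \<theta> (X s + V s))
         \<and> (\<forall>y. conv_dens fV (distr M borel X) y > 0 \<longrightarrow>
                \<theta> y = tweedie g fV (distr M borel X) y / conv_dens fV (distr M borel X) y)
         \<and> Ck_on k {y. conv_dens fV (distr M borel X) y > 0} \<theta>"
proof -
  note P = assms(1) and X[measurable] = assms(2) and V[measurable] = assms(3)
    and ind = assms(4) and f0 = assms(5) and dist = assms(6) and C0 = assms(7)
    and gm[measurable] = assms(9) and gi = assms(10)
  interpret prob_space M by (rule P)
  define PX where "PX = distr M borel X"
  have sPX[measurable_cong]: "sets PX = sets borel" unfolding PX_def by simp
  interpret PXs: prob_space PX unfolding PX_def by (rule prob_space_distr) simp
  interpret PXL: pair_sigma_finite PX lborel ..
  interpret LPX: pair_sigma_finite lborel PX ..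
  have bsmf: "bsm k fV" using C0 by (rule C0k_bsm)
  have fc: "continuous_on UNIV fV" and fbd: "bounded (range fV)" using bsm_cb[OF bsmf] by auto
  have fm[measurable]: "fV \<in> borel_measurable borel" using fc by (rule borel_measurable_continuous_onI)
  obtain BV where BV: "\<And>z. \<bar>fV z\<bar> \<le> BV" using fbd unfolding bounded_pos by auto
  have giPX: "integrable PX g" using gi unfolding PX_def .
  have g1: "integrable PX (\<lambda>_. 1::real)" by simp
  define fY where "fY = conv_dens fV PX"
  define T where "T = tweedie g fV PX"
  have fY_cv: "fY = cv PX (\<lambda>_. 1) fV" by (simp add: fun_eq_iff cv_def conv_dens_def fY_def)
  have T_cv: "T = cv PX g fV" by (simp add: fun_eq_iff cv_def tweedie_def T_def)
  have smY: "sm k UNIV fY" unfolding fY_cv by (rule bsm_cv[OF sPX g1 bsmf])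
  have smT: "sm k UNIV T" unfolding T_cv by (rule bsm_cv[OF sPX giPX bsmf])
  have cY: "continuous_on UNIV fY" using sm_cont[OF smY] .
  have cT: "continuous_on UNIV T" using sm_cont[OF smT] .
  have mY[measurable]: "fY \<in> borel_measurable borel" using cY by (rule borel_measurable_continuous_onI)
  have mT[measurable]: "T \<in> borel_measurable borel" using cT by (rule borel_measurable_continuous_onI)
  have fYi: "fY y = (\<integral>x. fV (y - x) \<partial>PX)" for y by (simp add: fY_def conv_dens_def)
  have Ti: "T y = (\<integral>x. g x * fV (y - x) \<partial>PX)" for y by (simp add: T_def tweedie_def)
  have ifV: "integrable PX (\<lambda>x. fV (y - x))" for y
    using integrable_wh[OF sPX g1 fc BV, of y] by simp
  have fY0: "0 \<le> fY y" for y unfolding fYi using f0 by (simp add: Bochner_Integration.integral_nonneg)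
  have key: "T y = 0" if "fY y = 0" for y
  proof -
    have "AE x in PX. fV (y - x) = 0"
      using that unfolding fYi using integral_nonneg_eq_0_iff_AE[OF ifV] f0 by auto
    then have "AE x in PX. g x * fV (y - x) = 0" by auto
    then show ?thesis unfolding Ti by (rule integral_eq_zero_AE)
  qed
  define \<theta> where "\<theta> y = (if 0 < fY y then T y / fY y else 0)" for y
  have \<theta>fY: "\<theta> y * fY y = T y" for y
    using key[of y] fY0[of y] by (auto simp: \<theta>_def)
  have m\<theta>[measurable]: "\<theta> \<in> borel_measurable borel" unfolding \<theta>_def by measurable
  define U where "U = {y. 0 < fY y}"
  have oU: "open U" unfolding U_def by (rule open_Collect_less[OF continuous_on_const cY])
  have "sm k U (\<lambda>y. T y / fY y)"
    by (rule sm_divide[OF oU sm_subset[OF smT] sm_subset[OF smY]]) (auto simp: U_def)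
  then have "sm k U \<theta>" by (rule sm_cong[OF oU, rotated]) (auto simp: U_def \<theta>_def)
  then have Ck: "Ck_on k U \<theta>" by (rule sm_Ck)
  have JL: "distr M (borel \<Otimes>\<^sub>M borel) (\<lambda>s. (X s, X s + V s)) =
         density (PX \<Otimes>\<^sub>M lborel) (\<lambda>z. ennreal (fV (snd z - fst z)))"
    unfolding PX_def by (rule joint_law[OF P X V ind dist fm])
  have pm: "(\<lambda>s. (X s, X s + V s)) \<in> M \<rightarrow>\<^sub>M borel \<Otimes>\<^sub>M borel" by measurable
  have transfer: "integrable M (\<lambda>s. H (X s) (X s + V s)) = integrable (PX \<Otimes>\<^sub>M lborel) (\<lambda>(x,y). fV (y - x) * H x y) \<and>
     integral\<^sup>L M (\<lambda>s. H (X s) (X s + V s)) = integral\<^sup>L (PX \<Otimes>\<^sub>M lborel) (\<lambda>(x,y). fV (y - x) * H x y)"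
    if Hm: "case_prod H \<in> borel_measurable (borel \<Otimes>\<^sub>M borel)" for H
  proof -
    have Hm'[measurable]: "case_prod H \<in> borel_measurable (PX \<Otimes>\<^sub>M lborel)"
      using Hm by measurable
    have qm: "(\<lambda>z. fV (snd z - fst z)) \<in> borel_measurable (PX \<Otimes>\<^sub>M lborel)" by measurable
    have e1: "integrable M (\<lambda>s. H (X s) (X s + V s)) = integrable (distr M (borel \<Otimes>\<^sub>M borel) (\<lambda>s. (X s, X s + V s))) (case_prod H)"
      using integrable_distr_eq[OF pm Hm] by simp
    have e2: "integral\<^sup>L M (\<lambda>s. H (X s) (X s + V s)) = integral\<^sup>L (distr M (borel \<Otimes>\<^sub>M borel) (\<lambda>s. (X s, X s + V s))) (case_prod H)"
      using integral_distr[OF pm Hm] by simp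
    show ?thesis unfolding e1 e2 JL
      using integrable_density[OF Hm' qm] integral_density[OF Hm' qm] f0
      by (simp add: split_beta')
  qed
  have igX: "integrable M (\<lambda>s. g (X s))"
    using gi integrable_distr_eq[of X M borel g] by simp
  have i1: "integrable (PX \<Otimes>\<^sub>M lborel) (\<lambda>(x,y). fV (y - x) * \<bar>g x\<bar>)"
    using transfer[of "\<lambda>x y. \<bar>g x\<bar>"] igX by simp
  have G_int: "integrable lborel (\<lambda>y. \<integral>x. fV (y - x) * \<bar>g x\<bar> \<partial>PX)"
    by (rule PXL.integrable_snd[OF i1])
  have T_le: "\<bar>T y\<bar> \<le> (\<integral>x. fV (y - x) * \<bar>g x\<bar> \<partial>PX)" for y
  proof -
    have "norm (T y) \<le> (\<integral>x. norm (g x * fV (y - x)) \<partial>PX)" unfolding Ti by (rule integral_norm_bound)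
    also have "\<dots> = (\<integral>x. fV (y - x) * \<bar>g x\<bar> \<partial>PX)"
      using f0 by (simp add: abs_mult mult.commute)
    finally show ?thesis by simp
  qed
  have T_int: "integrable lborel (\<lambda>y. \<bar>T y\<bar>)"
  proof (rule Bochner_Integration.integrable_bound[OF G_int])
    show "(\<lambda>y. \<bar>T y\<bar>) \<in> borel_measurable lborel" by measurable
    show "AE y in lborel. norm \<bar>T y\<bar> \<le> norm (\<integral>x. fV (y - x) * \<bar>g x\<bar> \<partial>PX)"
      using T_le by (auto intro: order_trans[OF _ abs_ge_self])
  qed
  have iL: "integrable (lborel \<Otimes>\<^sub>M PX) (\<lambda>(y,x). fV (y - x) * \<theta> y)"
  proof (rule LPX.Fubini_integrable)
    show "(\<lambda>(y,x). fV (y - x) * \<theta> y) \<in> borel_measurable (lborel \<Otimes>\<^sub>M PX)" by measurable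
    have "(\<integral>x. norm ((\<lambda>(y,x). fV (y - x) * \<theta> y) (y, x)) \<partial>PX) = \<bar>T y\<bar>" for y
    proof -
      have "(\<integral>x. norm ((\<lambda>(y,x). fV (y - x) * \<theta> y) (y, x)) \<partial>PX) = (\<integral>x. \<bar>\<theta> y\<bar> * fV (y - x) \<partial>PX)"
        using f0 by (simp add: abs_mult mult.commute)
      also have "\<dots> = \<bar>\<theta> y\<bar> * fY y" unfolding fYi by simp
      also have "\<dots> = \<bar>T y\<bar>" using \<theta>fY[of y] fY0[of y] by (metis abs_mult abs_of_nonneg)
      finally show ?thesis .
    qed
    then show "integrable lborel (\<lambda>y. \<integral>x. norm ((\<lambda>(y,x). fV (y - x) * \<theta> y) (y, x)) \<partial>PX)"
      using T_int by simp
    show "AE y in lborel. integrable PX (\<lambda>x. (\<lambda>(y,x). fV (y - x) * \<theta> y) (y, x))"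
      using ifV by auto
  qed
  have i\<theta>: "integrable (PX \<Otimes>\<^sub>M lborel) (\<lambda>(x,y). fV (y - x) * \<theta> y)"
    using LPX.integrable_product_swap[OF iL] by simp
  have i\<theta>M: "integrable M (\<lambda>s. \<theta> (X s + V s))"
    using transfer[of "\<lambda>x y. \<theta> y"] i\<theta> by simp
  define F where "F = vimage_algebra (space M) (\<lambda>s. X s + V s) borel"
  have Yf: "(\<lambda>s. X s + V s) \<in> space M \<rightarrow> space borel" by simp
  have sF: "sets F = {(\<lambda>s. X s + V s) -` B \<inter> space M | B. B \<in> sets borel}"
    unfolding F_def by (rule sets_vimage_algebra2[OF Yf])
  have sub: "subalgebra M F"
    unfolding subalgebra_def F_def
  proof
    show "space (vimage_algebra (space M) (\<lambda>s. X s + V s) borel) = space M" by simp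
    show "sets (vimage_algebra (space M) (\<lambda>s. X s + V s) borel) \<subseteq> sets M"
      using sF unfolding F_def by auto
  qed
  have sfs: "sigma_finite_subalgebra M F"
    by (rule finite_measure_subalgebra_is_sigma_finite)
      (simp add: finite_measure_subalgebra_def finite_measure_subalgebra_axioms_def sub finite_measure_axioms)
  have mF: "(\<lambda>s. \<theta> (X s + V s)) \<in> borel_measurable F"
    unfolding F_def using measurable_compose[OF measurable_vimage_algebra1[OF Yf] m\<theta>] by simp
  have ce: "AE s in M. real_cond_exp M F (\<lambda>s. g (X s)) s = \<theta> (X s + V s)"
  proof (rule sigma_finite_subalgebra.real_cond_exp_charact[OF sfs _ igX i\<theta>M mF])
    fix A assume "A \<in> sets F"
    then obtain B where B[measurable]: "B \<in> sets borel" and A: "A = (\<lambda>s. X s + V s) -` B \<inter> space M"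
      using sF by auto
    have indA: "indicator A s = indicator B (X s + V s)" if "s \<in> space M" for s :: 's
      using that unfolding A by (auto simp: indicator_def)
    have "(\<integral>s\<in>A. g (X s) \<partial>M) = (\<integral>s. indicator B (X s + V s) * g (X s) \<partial>M)"
      unfolding set_lebesgue_integral_def by (rule Bochner_Integration.integral_cong[OF refl]) (auto simp: indA)
    also have "\<dots> = integral\<^sup>L (PX \<Otimes>\<^sub>M lborel) (\<lambda>(x,y). fV (y - x) * (indicator B y * g x))"
      using transfer[of "\<lambda>x y. indicator B y * g x"] by simp
    also have "\<dots> = (\<integral>y. \<integral>x. fV (y - x) * (indicator B y * g x) \<partial>PX \<partial>lborel)"
    proof (rule PXL.integral_snd[symmetric])
      have "integrable M (\<lambda>s. indicator B (X s + V s) * g (X s))"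
        by (rule Bochner_Integration.integrable_bound[OF igX]) (auto simp: indicator_def)
      then show "integrable (PX \<Otimes>\<^sub>M lborel) (\<lambda>(x,y). fV (y - x) * (indicator B y * g x))"
        using transfer[of "\<lambda>x y. indicator B y * g x"] by simp
    qed
    also have "\<dots> = (\<integral>y. indicator B y * T y \<partial>lborel)"
    proof (rule Bochner_Integration.integral_cong[OF refl])
      fix y
      have "(\<lambda>x. fV (y - x) * (indicator B y * g x)) = (\<lambda>x. indicator B y * (g x * fV (y - x)))"
        by (auto simp: fun_eq_iff ac_simps)
      then show "(\<integral>x. fV (y - x) * (indicator B y * g x) \<partial>PX) = indicator B y * T y"
        by (simp add: Ti)
    qed
    also have "\<dots> = (\<integral>y. \<integral>x. fV (y - x) * (indicator B y * \<theta> y) \<partial>PX \<partial>lborel)"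
    proof (rule Bochner_Integration.integral_cong[OF refl])
      fix y
      have "(\<lambda>x. fV (y - x) * (indicator B y * \<theta> y)) = (\<lambda>x. (indicator B y * \<theta> y) * fV (y - x))"
        by (auto simp: fun_eq_iff ac_simps)
      then have "(\<integral>x. fV (y - x) * (indicator B y * \<theta> y) \<partial>PX) = indicator B y * (\<theta> y * fY y)"
        by (simp add: fYi)
      then show "indicator B y * T y = (\<integral>x. fV (y - x) * (indicator B y * \<theta> y) \<partial>PX)"
        using \<theta>fY[of y] by (simp only:)
    qed
    also have "\<dots> = integral\<^sup>L (PX \<Otimes>\<^sub>M lborel) (\<lambda>(x,y). fV (y - x) * (indicator B y * \<theta> y))"
    proof (rule PXL.integral_snd)
      have "integrable M (\<lambda>s. indicator B (X s + V s) * \<theta> (X s + V s))"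
        by (rule Bochner_Integration.integrable_bound[OF i\<theta>M]) (auto simp: indicator_def)
      then show "integrable (PX \<Otimes>\<^sub>M lborel) (\<lambda>(x,y). fV (y - x) * (indicator B y * \<theta> y))"
        using transfer[of "\<lambda>x y. indicator B y * \<theta> y"] by simp
    qed
    also have "\<dots> = (\<integral>s. indicator B (X s + V s) * \<theta> (X s + V s) \<partial>M)"
      using transfer[of "\<lambda>x y. indicator B y * \<theta> y"] by simp
    also have "\<dots> = (\<integral>s\<in>A. \<theta> (X s + V s) \<partial>M)"
      unfolding set_lebesgue_integral_def by (rule Bochner_Integration.integral_cong[OF refl]) (auto simp: indA)
    finally show "(\<integral>s\<in>A. g (X s) \<partial>M) = (\<integral>s\<in>A. \<theta> (X s + V s) \<partial>M)" .
  qed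
  show ?thesis
  proof (intro exI conjI)
    show "\<theta> \<in> borel_measurable borel" by (rule m\<theta>)
    show "AE s in M. real_cond_exp M (vimage_algebra (space M) (\<lambda>s. X s + V s) borel) (\<lambda>s. g (X s)) s = \<theta> (X s + V s)"
      using ce unfolding F_def .
    show "\<forall>y. conv_dens fV (distr M borel X) y > 0 \<longrightarrow>
                \<theta> y = tweedie g fV (distr M borel X) y / conv_dens fV (distr M borel X) y"
      by (simp add: \<theta>_def fY_def T_def PX_def)
    show "Ck_on k {y. conv_dens fV (distr M borel X) y > 0} \<theta>"
      using Ck by (simp add: U_def fY_def PX_def)
  qed
qed

end
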